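(* The class of penny graphs is $(6,1)$-disjointness-expressing.
   Context: A penny graph is the contact graph of a family of pairwise interior-disjoint unit disks in the plane (vertices are the disks, adjacent iff the disks touch). A class $\mathcal{C}$ of graphs is $(s,\kappa)$-disjointness-expressing if for some constant $\alpha>0$, for every positive integer $N$ and every $X\subseteq\{1,\dots,N\}$ one can define graphs $L(X)$ and $R(X)$, each containing a labelled set $S$ of special vertices, such that for all $A,B\subseteq\{1,\dots,N\}$: (i) the graph $g(L(A),R(B))$ obtained by identifying each vertex of $S$ in $L(A)$ with the corresponding vertex of $S$ in $R(B)$ is connected and has at most $\alpha N^{1/\kappa}$ vertices; (ii) the subgraph of $g(L(A),R(B))$ induced by the closed neighborhood $N[S]$ is independent of $A,B$ (for all $A,A',B,B'$ there is an isomorphism between these induced subgraphs that is the identity on $S$) and has at most $s$ vertices; (iii) $g(L(A),R(B))\in\mathcal{C}$ if and only if $A\cap B=\emptyset$. *)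

theory Defs
  imports "HOL-Analysis.Analysis"
begin

definition wf_graph :: "'v set \<Rightarrow> ('v \<times> 'v) set \<Rightarrow> bool" where
  "wf_graph V E \<longleftrightarrow> finite V \<and> E \<subseteq> V \<times> V \<and> sym E \<and> (\<forall>v. (v, v) \<notin> E)"

definition wf_labelled_graph :: "nat \<Rightarrow> 'v set \<Rightarrow> ('v \<times> 'v) set \<Rightarrow> (nat \<Rightarrow> 'v) \<Rightarrow> bool" where
  "wf_labelled_graph k V E \<sigma> \<longleftrightarrow> wf_graph V E \<and> inj_on \<sigma> {..<k} \<and> \<sigma> ` {..<k} \<subseteq> V"

text \<open>Penny graph: contact graph of pairwise interior-disjoint unit disks in the plane
  (identified with the complex numbers); disks of radius 1 centred at p v are interior
  disjoint iff the centres have distance at least 2, and touch iff the distance is 2.\<close>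

definition penny_graph :: "'v set \<Rightarrow> ('v \<times> 'v) set \<Rightarrow> bool" where
  "penny_graph V E \<longleftrightarrow> E \<subseteq> V \<times> V \<and> (\<forall>v. (v, v) \<notin> E) \<and>
     (\<exists>p :: 'v \<Rightarrow> complex.
        (\<forall>u\<in>V. \<forall>v\<in>V. u \<noteq> v \<longrightarrow> dist (p u) (p v) \<ge> 2) \<and>
        (\<forall>u\<in>V. \<forall>v\<in>V. u \<noteq> v \<longrightarrow> ((u, v) \<in> E \<longleftrightarrow> dist (p u) (p v) = 2)))"

text \<open>Gluing: vertices of the left graph become Inl v; a right vertex w becomes Inr w,
  except that the special right vertex with label i is identified with the special
  left vertex with label i.\<close>

definition glue_map :: "nat \<Rightarrow> (nat \<Rightarrow> 'v) \<Rightarrow> (nat \<Rightarrow> 'v) \<Rightarrow> 'v \<Rightarrow> 'v + 'v" where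
  "glue_map k \<sigma>L \<sigma>R w =
     (if \<exists>i<k. w = \<sigma>R i then Inl (\<sigma>L (THE i. i < k \<and> w = \<sigma>R i)) else Inr w)"

definition glue_V :: "nat \<Rightarrow> 'v set \<Rightarrow> (nat \<Rightarrow> 'v) \<Rightarrow> 'v set \<Rightarrow> (nat \<Rightarrow> 'v) \<Rightarrow> ('v + 'v) set" where
  "glue_V k VL \<sigma>L VR \<sigma>R = Inl ` VL \<union> glue_map k \<sigma>L \<sigma>R ` VR"

definition glue_E :: "nat \<Rightarrow> ('v \<times> 'v) set \<Rightarrow> (nat \<Rightarrow> 'v) \<Rightarrow> ('v \<times> 'v) set \<Rightarrow> (nat \<Rightarrow> 'v)
    \<Rightarrow> (('v + 'v) \<times> ('v + 'v)) set" where
  "glue_E k EL \<sigma>L ER \<sigma>R =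
     map_prod Inl Inl ` EL \<union> map_prod (glue_map k \<sigma>L \<sigma>R) (glue_map k \<sigma>L \<sigma>R) ` ER"

definition connected_graph :: "'v set \<Rightarrow> ('v \<times> 'v) set \<Rightarrow> bool" where
  "connected_graph V E \<longleftrightarrow> V \<noteq> {} \<and>
     (\<forall>u\<in>V. \<forall>v\<in>V. (\<lambda>x y. x \<in> V \<and> y \<in> V \<and> (x, y) \<in> E)\<^sup>*\<^sup>* u v)"

definition closed_nbhd :: "'v set \<Rightarrow> ('v \<times> 'v) set \<Rightarrow> 'v set \<Rightarrow> 'v set" where
  "closed_nbhd V E S = S \<union> {v \<in> V. \<exists>u\<in>S. (u, v) \<in> E}"

text \<open>(s, kappa)-disjointness-expressing class C of graphs (C given as a predicate on
  graphs with vertex type nat + nat, the type of glued graphs).\<close>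

definition disjointness_expressing ::
  "((nat + nat) set \<Rightarrow> ((nat + nat) \<times> (nat + nat)) set \<Rightarrow> bool) \<Rightarrow> nat \<Rightarrow> real \<Rightarrow> bool" where
  "disjointness_expressing C s \<kappa> \<longleftrightarrow>
    (\<exists>\<alpha>::real. \<alpha> > 0 \<and>
      (\<forall>N::nat. N \<ge> 1 \<longrightarrow>
        (\<exists>(k::nat) (LV :: nat set \<Rightarrow> nat set) (LE :: nat set \<Rightarrow> (nat \<times> nat) set)
            (L\<sigma> :: nat set \<Rightarrow> nat \<Rightarrow> nat)
            (RV :: nat set \<Rightarrow> nat set) (RE :: nat set \<Rightarrow> (nat \<times> nat) set)
            (R\<sigma> :: nat set \<Rightarrow> nat \<Rightarrow> nat).
          (\<forall>X. X \<subseteq> {1..N} \<longrightarrow>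
             wf_labelled_graph k (LV X) (LE X) (L\<sigma> X) \<and>
             wf_labelled_graph k (RV X) (RE X) (R\<sigma> X)) \<and>
          (\<forall>A B. A \<subseteq> {1..N} \<longrightarrow> B \<subseteq> {1..N} \<longrightarrow>
             (let V = glue_V k (LV A) (L\<sigma> A) (RV B) (R\<sigma> B);
                  E = glue_E k (LE A) (L\<sigma> A) (RE B) (R\<sigma> B);
                  S = (\<lambda>i. Inl (L\<sigma> A i)) ` {..<k}
              in connected_graph V E \<and>
                 real (card V) \<le> \<alpha> * real N powr (1 / \<kappa>) \<and>
                 card (closed_nbhd V E S) \<le> s \<and>
                 (C V E \<longleftrightarrow> A \<inter> B = {}))) \<and>
          (\<forall>A B A' B'. A \<subseteq> {1..N} \<longrightarrow> B \<subseteq> {1..N} \<longrightarrow> A' \<subseteq> {1..N} \<longrightarrow> B' \<subseteq> {1..N} \<longrightarrow>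
             (let V = glue_V k (LV A) (L\<sigma> A) (RV B) (R\<sigma> B);
                  E = glue_E k (LE A) (L\<sigma> A) (RE B) (R\<sigma> B);
                  V' = glue_V k (LV A') (L\<sigma> A') (RV B') (R\<sigma> B');
                  E' = glue_E k (LE A') (L\<sigma> A') (RE B') (R\<sigma> B');
                  NS = closed_nbhd V E ((\<lambda>i. Inl (L\<sigma> A i)) ` {..<k});
                  NS' = closed_nbhd V' E' ((\<lambda>i. Inl (L\<sigma> A' i)) ` {..<k})
              in \<exists>f. bij_betw f NS NS' \<and>
                    (\<forall>i<k. f (Inl (L\<sigma> A i)) = Inl (L\<sigma> A' i)) \<and>
                    (\<forall>u\<in>NS. \<forall>v\<in>NS. (u, v) \<in> E \<longleftrightarrow> (f u, f v) \<in> E'))))))"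

end

theory Submission
  imports Defs "HOL-Library.Nat_Bijection"
begin


definition Qf :: "int \<times> int \<Rightarrow> int \<times> int \<Rightarrow> int" where
  "Qf a b = (fst b - fst a)^2 + (fst b - fst a) * (snd b - snd a) + (snd b - snd a)^2"

definition ladj :: "int \<times> int \<Rightarrow> int \<times> int \<Rightarrow> bool" where
  "ladj a b \<longleftrightarrow> Qf a b = 1"

definition pos :: "int \<times> int \<Rightarrow> complex" where
  "pos q = Complex (2 * of_int (fst q) + of_int (snd q)) (sqrt 3 * of_int (snd q))"

lemma Q4: "4 * Qf a b = (2*(fst b - fst a) + (snd b - snd a))^2 + 3 * (snd b - snd a)^2"
  unfolding Qf_def by (simp add: power2_eq_square algebra_simps)

lemma norm_pos: "cmod (pos a - pos b) = 2 * sqrt (of_int (Qf a b))"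
proof -
  have "(cmod (pos a - pos b))^2 = of_int (4 * Qf a b)"
  proof -
    have "(cmod (pos a - pos b))^2 = (Re (pos a - pos b))^2 + (Im (pos a - pos b))^2"
      by (simp add: cmod_power2)
    also have "\<dots> = (2 * of_int (fst b - fst a) + of_int (snd b - snd a))^2 + (sqrt 3)^2 * (of_int (snd b - snd a))^2"
      by (simp add: pos_def power2_eq_square algebra_simps)
    also have "\<dots> = of_int ((2*(fst b - fst a) + (snd b - snd a))^2 + 3 * (snd b - snd a)^2)"
      by simp
    finally show ?thesis unfolding Q4 .
  qed
  then have "cmod (pos a - pos b) = sqrt (of_int (4 * Qf a b))"
    by (metis norm_ge_zero real_sqrt_unique)
  also have "\<dots> = 2 * sqrt (of_int (Qf a b))"
    by (simp add: real_sqrt_mult)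
  finally show ?thesis .
qed

lemma Qf_nonneg: "Qf a b \<ge> 0"
proof -
  have "4 * Qf a b \<ge> 0" unfolding Q4 by simp
  then show ?thesis by simp
qed

lemma Qf_pos: assumes "a \<noteq> b" shows "Qf a b \<ge> 1"
proof (rule ccontr)
  assume "\<not> Qf a b \<ge> 1"
  then have "Qf a b = 0" using Qf_nonneg[of a b] by simp
  then have "(2*(fst b - fst a) + (snd b - snd a))^2 + 3 * (snd b - snd a)^2 = 0"
    using Q4[of a b] by simp
  then have "snd b = snd a" "fst b = fst a"
    by (smt (verit) power2_less_eq_zero_iff zero_le_power2)+
  then show False using assms by (simp add: prod_eq_iff)
qed

lemma dist_pos_ge: "a \<noteq> b \<Longrightarrow> dist (pos a) (pos b) \<ge> 2"
  using Qf_pos[of a b] by (simp add: dist_norm norm_pos)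

lemma dist_pos_eq: "dist (pos a) (pos b) = 2 \<longleftrightarrow> ladj a b"
  by (simp add: dist_norm norm_pos ladj_def)

lemma ladj_iff: "ladj a b \<longleftrightarrow> (fst b - fst a, snd b - snd a) \<in> {(1,0),(-1,0),(0,1),(0,-1),(1,-1),(-1,1)}"
proof -
  obtain x y where xy: "x = fst b - fst a" "y = snd b - snd a" by blast
  have "ladj a b \<longleftrightarrow> x^2 + x*y + y^2 = 1" unfolding ladj_def Qf_def xy by simp
  also have "\<dots> \<longleftrightarrow> (x,y) \<in> {(1,0),(-1,0),(0,1),(0,-1),(1,-1),(-1,1)}"
  proof
    assume h: "x^2 + x*y + y^2 = 1"
    then have "(2*x+y)^2 + 3*y^2 = 4" by (simp add: power2_eq_square algebra_simps)
    then have "3*y^2 \<le> 4" by (smt (verit) zero_le_power2)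
    then have "y^2 \<le> 1" by simp
    then have "\<bar>y\<bar> \<le> 1" using abs_le_square_iff[of y 1] by simp
    then have "y = -1 \<or> y = 0 \<or> y = 1" by auto
    moreover have "(2*x+y)^2 \<le> 4" using \<open>(2*x+y)^2 + 3*y^2 = 4\<close> by (smt (verit) zero_le_power2)
    then have "\<bar>2*x+y\<bar> \<le> 2" using abs_le_square_iff[of "2*x+y" 2] by simp
    ultimately have "x = -1 \<or> x = 0 \<or> x = 1" by auto
    then show "(x,y) \<in> {(1,0),(-1,0),(0,1),(0,-1),(1,-1),(-1,1)}"
      using h \<open>y = -1 \<or> y = 0 \<or> y = 1\<close> by (auto simp: power2_eq_square)
  qed (auto simp: power2_eq_square)
  finally show ?thesis using xy by simp
qed

lemma unit_half:
  fixes x :: complex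
  assumes "cmod x = 1" "cmod (x - 1) = 1"
  shows "Re x = 1/2 \<and> (Im x)^2 = 3/4"
proof -
  have a: "(Re x)^2 + (Im x)^2 = 1" using assms(1) by (metis cmod_power2 power_one)
  have b: "(Re x - 1)^2 + (Im x)^2 = 1" using assms(2) by (metis cmod_power2 power_one minus_complex.sel one_complex.sel diff_zero)
  from a b have "Re x = 1/2" by (simp add: power2_eq_square algebra_simps)
  with a show ?thesis by (simp add: power2_eq_square)
qed

lemma two_sol:
  fixes a b c w :: complex
  assumes "cmod (a - b) = 2" "cmod (a - c) = 2" "cmod (b - c) = 2"
    "cmod (w - b) = 2" "cmod (w - c) = 2"
  shows "w = a \<or> w = b + c - a"
proof -
  define u where "u = c - b"
  have u0: "u \<noteq> 0" using assms(3) u_def by auto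
  have cu: "cmod u = 2" using assms(3) u_def by (simp add: norm_minus_commute)
  define x where "x = (w - b) / u"
  define y where "y = (a - b) / u"
  have "cmod x = 1" using assms(4) cu by (simp add: x_def norm_divide)
  moreover have "x - 1 = (w - c) / u" using u0 by (simp add: x_def u_def field_simps)
  then have "cmod (x - 1) = 1" using assms(5) cu by (simp add: norm_divide)
  ultimately have hx: "Re x = 1/2 \<and> (Im x)^2 = 3/4" by (rule unit_half)
  have "cmod y = 1" using assms(1) cu by (simp add: y_def norm_divide)
  moreover have "y - 1 = (a - c) / u" using u0 by (simp add: y_def u_def field_simps)
  then have "cmod (y - 1) = 1" using assms(2) cu by (simp add: norm_divide)
  ultimately have hy: "Re y = 1/2 \<and> (Im y)^2 = 3/4" by (rule unit_half)
  have "Im x = Im y \<or> Im x = - Im y"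
    using hx hy by (metis power2_eq_iff)
  then have "x = y \<or> x = 1 - y" using hx hy by (auto simp: complex_eq_iff)
  moreover have "w = b + u * x" using u0 by (simp add: x_def)
  moreover have "a = b + u * y" using u0 by (simp add: y_def)
  ultimately show ?thesis
  proof (elim disjE)
    assume "x = y" "w = b + u * x" "a = b + u * y"
    then show ?thesis by simp
  next
    assume "x = 1 - y" "w = b + u * x" "a = b + u * y"
    then have "w = b + u * (1 - y)" by simp
    then have "w = b + u - (b + u * y) + b" by (simp add: algebra_simps)
    then show ?thesis using \<open>a = b + u * y\<close> by (simp add: u_def)
  qed
qed

definition Tm :: "bool \<Rightarrow> complex \<Rightarrow> complex \<Rightarrow> complex \<Rightarrow> complex" where
  "Tm f zc e z = zc + e * (if f then cnj z else z)"

lemma Tm_aff: "Tm f zc e (u + v - w) = Tm f zc e u + Tm f zc e v - Tm f zc e w"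
  by (simp add: Tm_def algebra_simps)

lemma Tm_norm: "cmod e = 1 \<Longrightarrow> cmod (Tm f zc e u - Tm f zc e v) = cmod (u - v)"
proof -
  assume "cmod e = 1"
  have "Tm f zc e u - Tm f zc e v = e * (if f then cnj (u - v) else u - v)"
    by (simp add: Tm_def algebra_simps)
  then show ?thesis using \<open>cmod e = 1\<close> by (cases f) (auto simp: norm_mult simp del: complex_cnj_diff)
qed

definition padd :: "int \<times> int \<Rightarrow> int \<times> int \<Rightarrow> int \<times> int \<Rightarrow> int \<times> int" where
  "padd a b c = (fst b + fst c - fst a, snd b + snd c - snd a)"

lemma pos_padd: "pos (padd a b c) = pos b + pos c - pos a"
  by (simp add: pos_def padd_def complex_eq_iff algebra_simps)

lemma ladj_norm: "ladj a b \<Longrightarrow> cmod (pos a - pos b) = 2"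
  using dist_pos_eq by (simp add: dist_norm)

definition emb :: "(int \<times> int) set \<Rightarrow> ((int \<times> int) \<times> (int \<times> int)) set \<Rightarrow> (int \<times> int \<Rightarrow> complex) \<Rightarrow> bool" where
  "emb P Ep p \<longleftrightarrow> (\<forall>a\<in>P. \<forall>b\<in>P. a \<noteq> b \<longrightarrow> dist (p a) (p b) \<ge> 2) \<and>
     (\<forall>a\<in>P. \<forall>b\<in>P. a \<noteq> b \<longrightarrow> ((a, b) \<in> Ep \<longleftrightarrow> dist (p a) (p b) = 2))"

inductive_set rig :: "(int \<times> int) set \<Rightarrow> ((int \<times> int) \<times> (int \<times> int)) set \<Rightarrow> (int \<times> int) set"
  for P Ep where
  base0: "(0,0) \<in> rig P Ep"
| base1: "(1,0) \<in> rig P Ep"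
| base2: "(0,1) \<in> rig P Ep"
| step: "\<lbrakk>a \<in> rig P Ep; b \<in> rig P Ep; c \<in> rig P Ep; ladj a b; ladj b c; ladj a c;
          d \<in> P; (b, d) \<in> Ep; (c, d) \<in> Ep; d \<noteq> a; d = padd a b c\<rbrakk> \<Longrightarrow> d \<in> rig P Ep"

lemma ladj_irrefl: "\<not> ladj a a" by (simp add: ladj_def Qf_def)

lemma rigidity:
  assumes em: "emb P Ep p"
    and bP: "(0,0) \<in> P" "(1,0) \<in> P" "(0,1) \<in> P"
    and bE: "((0,0),(1,0)) \<in> Ep" "((0,0),(0,1)) \<in> Ep" "((1,0),(0,1)) \<in> Ep"
  shows "\<exists>f zc e. cmod e = 1 \<and> (\<forall>q\<in>rig P Ep. q \<in> P \<and> p q = Tm f zc e (pos q))"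
proof -
  have E2: "a \<in> P \<Longrightarrow> b \<in> P \<Longrightarrow> a \<noteq> b \<Longrightarrow> (a, b) \<in> Ep \<Longrightarrow> cmod (p a - p b) = 2" for a b
    using em unfolding emb_def by (simp add: dist_norm)
  have D2: "a \<in> P \<Longrightarrow> b \<in> P \<Longrightarrow> a \<noteq> b \<Longrightarrow> p a \<noteq> p b" for a b
    using em unfolding emb_def by fastforce
  define zc where "zc = p (0,0)"
  define e where "e = (p (1,0) - zc) / 2"
  have d01: "cmod (p (0,0) - p (1,0)) = 2" using E2 bP bE by simp
  then have ce: "cmod e = 1" by (simp add: e_def zc_def norm_divide norm_minus_commute)
  have p1: "p (1,0) = zc + 2 * e" by (simp add: e_def field_simps)
  define zp where "zp = Tm False zc e (pos (0,1))"
  have T0: "Tm f zc e (pos (0,0)) = p (0,0)" for f by (simp add: Tm_def pos_def zc_def complex_eq_iff)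
  have T1: "Tm f zc e (pos (1,0)) = p (1,0)" for f
    by (simp add: Tm_def pos_def p1 complex_eq_iff)
  have n1: "cmod (zp - p (0,0)) = 2"
    using Tm_norm[OF ce, where f=False and zc=zc and u="pos (0,1)" and v="pos (0,0)"] T0[of False]
    ladj_norm[of "(0,1)" "(0,0)"] by (simp add: zp_def ladj_def Qf_def)
  have n2: "cmod (zp - p (1,0)) = 2"
    using Tm_norm[OF ce, where f=False and zc=zc and u="pos (0,1)" and v="pos (1,0)"] T1[of False]
    ladj_norm[of "(0,1)" "(1,0)"] by (simp add: zp_def ladj_def Qf_def)
  have w1: "cmod (p (0,1) - p (0,0)) = 2" using E2[of "(0,0)" "(0,1)"] bP bE
    by (simp add: norm_minus_commute)
  have w2: "cmod (p (0,1) - p (1,0)) = 2" using E2[of "(1,0)" "(0,1)"] bP bE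
    by (simp add: norm_minus_commute)
  from two_sol[OF n1 n2 d01 w1 w2]
  have "p (0,1) = zp \<or> p (0,1) = p (0,0) + p (1,0) - zp" .
  moreover have "Tm True zc e (pos (0,1)) = p (0,0) + p (1,0) - zp"
    by (simp add: zp_def Tm_def pos_def p1 zc_def complex_eq_iff algebra_simps)
  ultimately obtain f where f: "p (0,1) = Tm f zc e (pos (0,1))"
    unfolding zp_def by (metis (full_types))
  have "q \<in> P \<and> p q = Tm f zc e (pos q)" if "q \<in> rig P Ep" for q
    using that
  proof (induction rule: rig.induct)
    case base0 then show ?case using bP T0 by simp
  next
    case base1 then show ?case using bP T1 by simp
  next
    case base2 then show ?case using bP f by simp
  next
    case (step a b c d)
    have hd: "d = padd a b c" "ladj a b" "ladj a c" using step by auto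
    have "b \<noteq> d"
    proof
      assume "b = d"
      then have "c = a" using hd(1) by (simp add: padd_def prod_eq_iff)
      then show False using hd(3) ladj_irrefl by simp
    qed
    have "c \<noteq> d"
    proof
      assume "c = d"
      then have "b = a" using hd(1) by (simp add: padd_def prod_eq_iff)
      then show False using hd(2) ladj_irrefl by simp
    qed
    have ab: "cmod (p a - p b) = 2" using step Tm_norm[OF ce] ladj_norm by simp
    have ac: "cmod (p a - p c) = 2" using step Tm_norm[OF ce] ladj_norm by simp
    have bc: "cmod (p b - p c) = 2" using step Tm_norm[OF ce] ladj_norm by simp
    have db: "cmod (p d - p b) = 2" using E2[of b d] step \<open>b \<noteq> d\<close> by (simp add: norm_minus_commute)
    have dc: "cmod (p d - p c) = 2" using E2[of c d] step \<open>c \<noteq> d\<close> by (simp add: norm_minus_commute)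
    have "p d \<noteq> p a" using D2[of d a] step by simp
    with two_sol[OF ab ac bc db dc] have "p d = p b + p c - p a" by simp
    also have "\<dots> = Tm f zc e (pos d)" using step by (simp add: pos_padd Tm_aff)
    finally show ?case using step by simp
  qed
  then show ?thesis using ce by blast
qed



definition Mx :: "nat \<Rightarrow> int" where "Mx N = 2 * int N + 5"

definition PL :: "nat \<Rightarrow> nat set \<Rightarrow> (int \<times> int) set" where
  "PL N A = {(0,0),(1,0)} \<union> {q. 0 \<le> fst q \<and> fst q \<le> Mx N \<and> (snd q = 1 \<or> snd q = 2)}
     \<union> (\<lambda>i. (2 * int i + 4, 0)) ` A"

definition PR :: "nat \<Rightarrow> nat set \<Rightarrow> (int \<times> int) set" where
  "PR N B = {(0,0),(1,0),(1,-1),(2,-1)} \<union> {q. 1 \<le> fst q \<and> fst q \<le> Mx N \<and> (snd q = -2 \<or> snd q = -3)}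
     \<union> (\<lambda>j. (2 * int j + 4, -1)) ` B"

definition EL :: "(int \<times> int) set \<Rightarrow> ((int \<times> int) \<times> (int \<times> int)) set" where
  "EL P = {(a,b). a \<in> P \<and> b \<in> P \<and> ladj a b}"

definition Ep :: "nat \<Rightarrow> nat set \<Rightarrow> nat set \<Rightarrow> ((int \<times> int) \<times> (int \<times> int)) set" where
  "Ep N A B = EL (PL N A) \<union> EL (PR N B)"

definition NS0 :: "(int \<times> int) set" where
  "NS0 = {(0,0),(1,0),(0,1),(1,1),(1,-1),(2,-1)}"

context
  fixes N :: nat and A B :: "nat set"
  assumes AN: "A \<subseteq> {1..N}" and BN: "B \<subseteq> {1..N}"
begin

abbreviation "PP \<equiv> PL N A \<union> PR N B"
abbreviation "RG \<equiv> rig PP (Ep N A B)"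

lemma stepL:
  assumes "a \<in> RG" "b \<in> RG" "c \<in> RG" "ladj a b" "ladj b c" "ladj a c"
    "b \<in> PL N A" "c \<in> PL N A" "d \<in> PL N A" "ladj b d" "ladj c d" "d \<noteq> a" "d = padd a b c"
  shows "d \<in> RG"
  by (rule rig.step[OF assms(1-6)]) (use assms in \<open>auto simp: Ep_def EL_def\<close>)

lemma stepR:
  assumes "a \<in> RG" "b \<in> RG" "c \<in> RG" "ladj a b" "ladj b c" "ladj a c"
    "b \<in> PR N B" "c \<in> PR N B" "d \<in> PR N B" "ladj b d" "ladj c d" "d \<noteq> a" "d = padd a b c"
  shows "d \<in> RG"
  by (rule rig.step[OF assms(1-6)]) (use assms in \<open>auto simp: Ep_def EL_def\<close>)

lemma M5: "Mx N \<ge> 5" by (simp add: Mx_def)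

lemma inPL_strip: "0 \<le> m \<Longrightarrow> m \<le> Mx N \<Longrightarrow> (y = 1 \<or> y = 2) \<Longrightarrow> (m, y) \<in> PL N A"
  by (auto simp: PL_def)

lemma inPR_strip: "1 \<le> m \<Longrightarrow> m \<le> Mx N \<Longrightarrow> (y = -2 \<or> y = -3) \<Longrightarrow> (m, y) \<in> PR N B"
  by (auto simp: PR_def)

lemma r01: "(1,1) \<in> RG"
  by (rule stepL[of "(0,0)" "(1,0)" "(0,1)"])
     (use M5 in \<open>auto simp: ladj_def Qf_def padd_def rig.base0 rig.base1 rig.base2 PL_def\<close>)

lemma r02: "(0,2) \<in> RG"
  by (rule stepL[of "(1,0)" "(0,1)" "(1,1)"])
     (use M5 r01 in \<open>auto simp: ladj_def Qf_def padd_def rig.base0 rig.base1 rig.base2 PL_def\<close>)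

lemma r12: "(1,2) \<in> RG"
  by (rule stepL[of "(0,1)" "(0,2)" "(1,1)"])
     (use M5 r01 r02 in \<open>auto simp: ladj_def Qf_def padd_def rig.base0 rig.base1 rig.base2 PL_def\<close>)

lemma stripL: "int n + 1 \<le> Mx N \<Longrightarrow> (int n, 2) \<in> RG \<and> (int n + 1, 1) \<in> RG \<and> (int n + 1, 2) \<in> RG"
proof (induction n)
  case 0 then show ?case using r01 r02 r12 by simp
next
  case (Suc n)
  then have IH: "(int n, 2) \<in> RG" "(int n + 1, 1) \<in> RG" "(int n + 1, 2) \<in> RG" by auto
  have a: "(int n + 2, 1) \<in> RG"
    by (rule stepL[of "(int n, 2)" "(int n + 1, 1)" "(int n + 1, 2)"])
       (use IH Suc.prems in \<open>auto simp: ladj_def Qf_def padd_def intro!: inPL_strip\<close>)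
  have b: "(int n + 2, 2) \<in> RG"
    by (rule stepL[of "(int n + 1, 1)" "(int n + 1, 2)" "(int n + 2, 1)"])
       (use IH a Suc.prems in \<open>auto simp: ladj_def Qf_def padd_def intro!: inPL_strip\<close>)
  have e1: "int (Suc n) = int n + 1" "int n + 1 + 1 = int n + 2" by simp_all
  show ?case unfolding e1 using IH a b by blast
qed

lemma stripL': "0 \<le> m \<Longrightarrow> m \<le> Mx N \<Longrightarrow> (y = 1 \<or> y = 2) \<Longrightarrow> (m, y) \<in> RG"
proof -
  assume h: "0 \<le> m" "m \<le> Mx N" "y = 1 \<or> y = 2"
  show ?thesis
  proof (cases "m = 0")
    case True
    then show ?thesis using h r02 rig.base2 by auto
  next
    case False
    define n where "n = nat (m - 1)"
    have n: "m = int n + 1" using h(1) False by (simp add: n_def)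
    then show ?thesis using stripL[of n] h by auto
  qed
qed

lemma rR1: "(1,-1) \<in> RG"
  by (rule stepR[of "(0,1)" "(0,0)" "(1,0)"])
     (auto simp: ladj_def Qf_def padd_def rig.base0 rig.base1 rig.base2 PR_def)

lemma rR2: "(2,-1) \<in> RG"
  by (rule stepR[of "(0,0)" "(1,0)" "(1,-1)"])
     (use rR1 in \<open>auto simp: ladj_def Qf_def padd_def rig.base0 rig.base1 rig.base2 PR_def\<close>)

lemma rR3: "(2,-2) \<in> RG"
  by (rule stepR[of "(1,0)" "(1,-1)" "(2,-1)"])
     (use rR1 rR2 M5 in \<open>auto simp: ladj_def Qf_def padd_def rig.base0 rig.base1 rig.base2 PR_def\<close>)

lemma rR4: "(1,-2) \<in> RG"
  by (rule stepR[of "(2,-1)" "(1,-1)" "(2,-2)"])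
     (use rR1 rR2 rR3 M5 in \<open>auto simp: ladj_def Qf_def padd_def PR_def\<close>)

lemma rR5: "(2,-3) \<in> RG"
  by (rule stepR[of "(1,-1)" "(1,-2)" "(2,-2)"])
     (use rR1 rR4 rR3 M5 in \<open>auto simp: ladj_def Qf_def padd_def PR_def\<close>)

lemma rR6: "(1,-3) \<in> RG"
  by (rule stepR[of "(2,-2)" "(1,-2)" "(2,-3)"])
     (use rR5 rR4 rR3 M5 in \<open>auto simp: ladj_def Qf_def padd_def PR_def\<close>)

lemma stripR: "int n + 2 \<le> Mx N \<Longrightarrow> (int n + 1, -2) \<in> RG \<and> (int n + 2, -3) \<in> RG \<and> (int n + 2, -2) \<in> RG"
proof (induction n)
  case 0 then show ?case using rR3 rR4 rR5 by simp
next
  case (Suc n)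
  then have IH: "(int n + 1, -2) \<in> RG" "(int n + 2, -3) \<in> RG" "(int n + 2, -2) \<in> RG" by auto
  have a: "(int n + 3, -3) \<in> RG"
    by (rule stepR[of "(int n + 1, -2)" "(int n + 2, -3)" "(int n + 2, -2)"])
       (use IH Suc.prems in \<open>auto simp: ladj_def Qf_def padd_def intro!: inPR_strip\<close>)
  have b: "(int n + 3, -2) \<in> RG"
    by (rule stepR[of "(int n + 2, -3)" "(int n + 2, -2)" "(int n + 3, -3)"])
       (use IH a Suc.prems in \<open>auto simp: ladj_def Qf_def padd_def intro!: inPR_strip\<close>)
  have e1: "int (Suc n) = int n + 1" "int n + 1 + 1 = int n + 2" "int n + 1 + 2 = int n + 3" by simp_all
  show ?case unfolding e1 using IH a b by blast
qed

lemma stripR': "1 \<le> m \<Longrightarrow> m \<le> Mx N \<Longrightarrow> (y = -2 \<or> y = -3) \<Longrightarrow> (m, y) \<in> RG"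
proof -
  assume h: "1 \<le> m" "m \<le> Mx N" "y = -2 \<or> y = -3"
  show ?thesis
  proof (cases "m = 1")
    case True
    then show ?thesis using h rR4 rR6 by auto
  next
    case False
    define n where "n = nat (m - 2)"
    have n: "m = int n + 2" using h(1) False by (simp add: n_def)
    then show ?thesis using stripR[of n] h by auto
  qed
qed

lemma tipL_in: "i \<in> A \<Longrightarrow> (2 * int i + 4, 0) \<in> PL N A"
  unfolding PL_def by (intro UnI2 imageI)

lemma tipR_in: "j \<in> B \<Longrightarrow> (2 * int j + 4, -1) \<in> PR N B"
  unfolding PR_def by (intro UnI2 imageI)

lemma tipL: "i \<in> A \<Longrightarrow> (2 * int i + 4, 0) \<in> RG"
proof -
  assume i: "i \<in> A"
  then have iN: "int i \<le> int N" using AN by auto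
  show ?thesis
    by (rule stepL[of "(2 * int i + 3, 2)" "(2 * int i + 3, 1)" "(2 * int i + 4, 1)"])
       (use i iN in \<open>auto simp: ladj_def Qf_def padd_def Mx_def intro!: stripL' inPL_strip tipL_in\<close>)
qed

lemma tipR: "j \<in> B \<Longrightarrow> (2 * int j + 4, -1) \<in> RG"
proof -
  assume j: "j \<in> B"
  then have jN: "int j \<le> int N" using BN by auto
  show ?thesis
    by (rule stepR[of "(2 * int j + 5, -3)" "(2 * int j + 4, -2)" "(2 * int j + 5, -2)"])
       (use j jN in \<open>auto simp: ladj_def Qf_def padd_def Mx_def intro!: stripR' inPR_strip tipR_in\<close>)
qed

lemma all_rig: "q \<in> PP \<Longrightarrow> q \<in> RG"
proof -
  assume q: "q \<in> PP"
  obtain x y where xy: "q = (x, y)" by (cases q)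
  show ?thesis unfolding xy using q[unfolded xy PL_def PR_def]
    using rig.base0 rig.base1 r01 rR1 rR2 tipL tipR stripL' stripR' by auto
qed

lemma ladj_sym: "ladj a b \<Longrightarrow> ladj b a"
  by (simp add: ladj_def Qf_def power2_eq_square algebra_simps)

lemma Ep_sym: "(a, b) \<in> Ep N A B \<Longrightarrow> (b, a) \<in> Ep N A B"
  by (auto simp: Ep_def EL_def intro: ladj_sym)

lemma Ep_sub: "(a, b) \<in> Ep N A B \<Longrightarrow> a \<in> PP \<and> b \<in> PP"
  by (auto simp: Ep_def EL_def)

lemma Ep_ladj: "(a, b) \<in> Ep N A B \<Longrightarrow> ladj a b"
  by (auto simp: Ep_def EL_def)

lemma base_P: "(0,0) \<in> PP" "(1,0) \<in> PP" "(0,1) \<in> PP"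
  using M5 by (auto simp: PL_def)

lemma base_E: "((0,0),(1,0)) \<in> Ep N A B" "((0,0),(0,1)) \<in> Ep N A B" "((1,0),(0,1)) \<in> Ep N A B"
  using M5 by (auto simp: Ep_def EL_def PL_def ladj_def Qf_def)

lemma nonpenny:
  assumes "i \<in> A" "i \<in> B"
  shows "\<not> emb PP (Ep N A B) p"
proof
  assume em: "emb PP (Ep N A B) p"
  from rigidity[OF em base_P base_E] obtain f zc e where
    ce: "cmod e = 1" and T: "\<forall>q\<in>RG. q \<in> PP \<and> p q = Tm f zc e (pos q)" by blast
  define a where "a = (2 * int i + 4, 0::int)"
  define b where "b = (2 * int i + 4, -1::int)"
  have aR: "a \<in> RG" using tipL[OF assms(1)] by (simp add: a_def)
  have bR: "b \<in> RG" using tipR[OF assms(2)] by (simp add: b_def)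
  have "cmod (p a - p b) = cmod (pos a - pos b)" using T aR bR Tm_norm[OF ce] by simp
  also have "\<dots> = 2" by (rule ladj_norm) (simp add: a_def b_def ladj_def Qf_def)
  finally have "dist (p a) (p b) = 2" by (simp add: dist_norm)
  moreover have "a \<noteq> b" "a \<in> PP" "b \<in> PP" using T aR bR by (auto simp: a_def b_def)
  ultimately have "(a, b) \<in> Ep N A B" using em unfolding emb_def by blast
  moreover have "b \<notin> PL N A" by (auto simp: b_def PL_def)
  moreover have "a \<notin> PR N B" by (auto simp: a_def PR_def)
  ultimately show False by (auto simp: Ep_def EL_def)
qed

lemma PL_only: "q \<in> PL N A \<Longrightarrow> q \<notin> PR N B \<Longrightarrow> snd q \<ge> 1 \<or> (\<exists>i\<in>A. q = (2 * int i + 4, 0))"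
  by (auto simp: PL_def PR_def)

lemma PR_only: "q \<in> PR N B \<Longrightarrow> snd q \<le> -2 \<or> q = (1,-1) \<or> q = (2,-1) \<or> (\<exists>j\<in>B. q = (2 * int j + 4, -1)) \<or> q \<in> {(0,0),(1,0)}"
  by (auto simp: PR_def)

lemma cross_imp:
  assumes "A \<inter> B = {}" "a \<in> PL N A" "a \<notin> PR N B" "b \<in> PR N B" "b \<notin> PL N A" "ladj a b"
  shows False
proof -
  have b0: "b \<notin> {(0,0),(1,0)}" using assms(5) by (auto simp: PL_def)
  from PL_only[OF assms(2,3)] PR_only[OF assms(4)] b0 assms(6)[unfolded ladj_iff]
  show False
  proof (elim disjE bexE)
  qed (use assms(1) in \<open>auto, presburger\<close>)
qed

lemma penny_emb:
  assumes "A \<inter> B = {}"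
  shows "emb PP (Ep N A B) pos"
  unfolding emb_def
proof (intro conjI ballI impI)
  fix a b assume "a \<in> PP" "b \<in> PP" "a \<noteq> b"
  then show "2 \<le> dist (pos a) (pos b)" by (simp add: dist_pos_ge)
next
  fix a b assume ab: "a \<in> PP" "b \<in> PP" "a \<noteq> b"
  show "(a, b) \<in> Ep N A B \<longleftrightarrow> dist (pos a) (pos b) = 2"
  proof
    assume "(a, b) \<in> Ep N A B" then show "dist (pos a) (pos b) = 2"
      using Ep_ladj dist_pos_eq by blast
  next
    assume "dist (pos a) (pos b) = 2"
    then have l: "ladj a b" by (simp add: dist_pos_eq)
    show "(a, b) \<in> Ep N A B"
    proof (cases "(a \<in> PL N A \<and> b \<in> PL N A) \<or> (a \<in> PR N B \<and> b \<in> PR N B)")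
      case True then show ?thesis using l by (auto simp: Ep_def EL_def)
    next
      case False
      then have "(a \<in> PL N A \<and> a \<notin> PR N B \<and> b \<in> PR N B \<and> b \<notin> PL N A) \<or>
                 (b \<in> PL N A \<and> b \<notin> PR N B \<and> a \<in> PR N B \<and> a \<notin> PL N A)" using ab by blast
      then show ?thesis using cross_imp[OF assms] l ladj_sym by blast
    qed
  qed
qed

abbreviation "ER \<equiv> (\<lambda>x y. (x, y) \<in> Ep N A B)"

lemma reach_rig: "q \<in> RG \<Longrightarrow> ER\<^sup>*\<^sup>* (0,0) q \<and> ER\<^sup>*\<^sup>* q (0,0)"
proof (induction rule: rig.induct)
  case base0 then show ?case by simp
next
  case base1 then show ?case using base_E Ep_sym
    by (metis (no_types, lifting) r_into_rtranclp)
next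
  case base2 then show ?case using base_E Ep_sym
    by (metis (no_types, lifting) r_into_rtranclp)
next
  case (step a b c d)
  then have "ER b d" "ER d b" using Ep_sym by auto
  then show ?case using step
    by (meson rtranclp.rtrancl_into_rtrancl converse_rtranclp_into_rtranclp)
qed


lemma nbhd_pts: "closed_nbhd PP (Ep N A B) {(0,0),(1,0)} = NS0"
proof
  show "closed_nbhd PP (Ep N A B) {(0,0),(1,0)} \<subseteq> NS0"
  proof
    fix v assume "v \<in> closed_nbhd PP (Ep N A B) {(0,0),(1,0)}"
    then have "v \<in> {(0,0),(1,0)} \<or> (v \<in> PP \<and> (ladj (0,0) v \<or> ladj (1,0) v))"
      unfolding closed_nbhd_def using Ep_ladj by blast
    then show "v \<in> NS0"
      unfolding ladj_iff NS0_def PL_def PR_def by (auto simp: prod_eq_iff)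
  qed
next
  show "NS0 \<subseteq> closed_nbhd PP (Ep N A B) {(0,0),(1,0)}"
    using M5 unfolding NS0_def closed_nbhd_def
    by (auto simp: Ep_def EL_def PL_def PR_def ladj_def Qf_def)
qed

lemma NS0_PL: "q \<in> NS0 \<Longrightarrow> q \<in> PL N A \<longleftrightarrow> q \<in> {(0,0),(1,0),(0,1),(1,1)}"
  using M5 by (auto simp: NS0_def PL_def)

lemma NS0_PR: "q \<in> NS0 \<Longrightarrow> q \<in> PR N B \<longleftrightarrow> q \<in> {(0,0),(1,0),(1,-1),(2,-1)}"
  using M5 by (auto simp: NS0_def PR_def)

lemma PP_box: "PP \<subseteq> {0..Mx N} \<times> {-3..2}"
  using AN BN by (auto simp: PL_def PR_def Mx_def)

lemma PP_finite: "finite PP"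
  using PP_box finite_subset by blast

lemma PP_card: assumes "N \<ge> 1" shows "card PP \<le> 48 * N"
proof -
  have "card PP \<le> card ({0..Mx N} \<times> {-3..(2::int)})"
    by (rule card_mono[OF _ PP_box]) simp
  also have "\<dots> = nat (Mx N + 1) * 6" by (simp add: card_cartesian_product)
  also have "nat (Mx N + 1) = 2 * N + 6" by (simp add: Mx_def nat_add_distrib nat_mult_distrib)
  also have "(2 * N + 6) * 6 \<le> 48 * N" using assms by simp
  finally show ?thesis .
qed

end



definition enc :: "int \<times> int \<Rightarrow> nat" where
  "enc q = prod_encode (int_encode (fst q), int_encode (snd q))"

definition vert :: "int \<times> int \<Rightarrow> nat + nat" where
  "vert q = (if snd q \<ge> 0 then Inl (enc q) else Inr (enc q))"

definition sig :: "nat \<Rightarrow> nat" where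
  "sig i = (if i = 0 then enc (0,0) else enc (1,0))"

definition encE :: "((int \<times> int) \<times> (int \<times> int)) set \<Rightarrow> (nat \<times> nat) set" where
  "encE E = (\<lambda>(a,b). (enc a, enc b)) ` E"

definition vvE :: "((int \<times> int) \<times> (int \<times> int)) set \<Rightarrow> ((nat + nat) \<times> (nat + nat)) set" where
  "vvE E = (\<lambda>(a,b). (vert a, vert b)) ` E"

lemma enc_eq[simp]: "enc a = enc b \<longleftrightarrow> a = b"
  by (simp add: enc_def int_encode_eq prod_eq_iff)

lemma inj_enc: "inj enc" by (simp add: inj_def)

lemma vert_eq[simp]: "vert a = vert b \<longleftrightarrow> a = b"
  by (auto simp: vert_def)

lemma inj_vert: "inj vert" by (simp add: inj_def)

lemma vvE_mem: "(vert a, vert b) \<in> vvE E \<longleftrightarrow> (a, b) \<in> E"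
  by (force simp: vvE_def)

lemma sig_cases: "(\<exists>i<2. w = sig i) \<longleftrightarrow> w = enc (0,0) \<or> w = enc (1,0)"
  by (auto simp: sig_def less_2_cases_iff)

lemma glue_map_S0: "q \<in> {(0,0),(1,0)} \<Longrightarrow> glue_map 2 sig sig (enc q) = Inl (enc q)"
proof -
  assume q: "q \<in> {(0,0),(1,0)}"
  then have ex: "\<exists>i<2. enc q = sig i" using sig_cases by auto
  have uniq: "i < 2 \<Longrightarrow> j < 2 \<Longrightarrow> sig i = sig j \<Longrightarrow> i = j" for i j
    by (auto simp: sig_def less_2_cases_iff)
  have "\<exists>!i. i < 2 \<and> enc q = sig i" using ex uniq by metis
  then have "(THE i. i < 2 \<and> enc q = sig i) < 2 \<and> enc q = sig (THE i. i < 2 \<and> enc q = sig i)"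
    by (rule theI')
  then show ?thesis using ex unfolding glue_map_def by metis
qed

lemma glue_map_other: "q \<notin> {(0,0),(1,0)} \<Longrightarrow> glue_map 2 sig sig (enc q) = Inr (enc q)"
proof -
  assume q: "q \<notin> {(0,0),(1,0)}"
  then have "\<not> (\<exists>i<2. enc q = sig i)" using sig_cases by auto
  then show ?thesis unfolding glue_map_def by simp
qed

lemma PL_snd: "q \<in> PL N A \<Longrightarrow> snd q \<ge> 0"
  by (auto simp: PL_def)

lemma PR_snd: "q \<in> PR N B \<Longrightarrow> q \<notin> {(0,0),(1,0)} \<Longrightarrow> snd q < 0"
  by (auto simp: PR_def)

lemma glue_map_PR: "q \<in> PR N B \<Longrightarrow> glue_map 2 sig sig (enc q) = vert q"
  by (cases "q \<in> {(0,0),(1,0)}")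
     (auto simp: glue_map_S0 glue_map_other vert_def dest: PR_snd)

lemma Inl_PL: "q \<in> PL N A \<Longrightarrow> Inl (enc q) = vert q"
  by (auto simp: vert_def dest: PL_snd)

lemma glue_V_eq:
  "glue_V 2 (enc ` PL N A) sig (enc ` PR N B) sig = vert ` (PL N A \<union> PR N B)"
proof -
  have "Inl ` enc ` PL N A = vert ` PL N A"
    unfolding image_image by (rule image_cong) (auto simp: Inl_PL)
  moreover have "glue_map 2 sig sig ` enc ` PR N B = vert ` PR N B"
    unfolding image_image by (rule image_cong) (auto simp: glue_map_PR)
  ultimately show ?thesis unfolding glue_V_def by (simp add: image_Un)
qed

lemma glue_E_eq:
  "glue_E 2 (encE (EL (PL N A))) sig (encE (EL (PR N B))) sig = vvE (Ep N A B)"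
proof -
  have "map_prod Inl Inl ` encE (EL (PL N A)) = vvE (EL (PL N A))"
    unfolding encE_def vvE_def image_image
    by (rule image_cong) (auto simp: EL_def Inl_PL)
  moreover have "map_prod (glue_map 2 sig sig) (glue_map 2 sig sig) ` encE (EL (PR N B)) = vvE (EL (PR N B))"
    unfolding encE_def vvE_def image_image
    by (rule image_cong) (auto simp: EL_def glue_map_PR)
  ultimately show ?thesis unfolding glue_E_def Ep_def vvE_def by (simp add: image_Un)
qed

lemma S_eq: "(\<lambda>i. Inl (sig i)) ` {..<2} = vert ` {(0,0),(1,0)}"
proof -
  have "{..<2::nat} = {0,1}" by auto
  then show ?thesis by (simp add: sig_def vert_def)
qed

lemma penny_transfer:
  assumes "E \<subseteq> P \<times> P" "\<forall>a. (a, a) \<notin> E"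
  shows "penny_graph (vert ` P) (vvE E) \<longleftrightarrow> (\<exists>p. emb P E p)"
proof
  assume pg: "penny_graph (vert ` P) (vvE E)"
  have "\<exists>p :: nat + nat \<Rightarrow> complex. (\<forall>u\<in>vert ` P. \<forall>v\<in>vert ` P. u \<noteq> v \<longrightarrow> dist (p u) (p v) \<ge> 2) \<and>
     (\<forall>u\<in>vert ` P. \<forall>v\<in>vert ` P. u \<noteq> v \<longrightarrow> ((u, v) \<in> vvE E \<longleftrightarrow> dist (p u) (p v) = 2))"
    using pg[unfolded penny_graph_def] by (elim conjE)
  then obtain p :: "nat + nat \<Rightarrow> complex" where
    p1: "\<forall>u\<in>vert ` P. \<forall>v\<in>vert ` P. u \<noteq> v \<longrightarrow> dist (p u) (p v) \<ge> 2" and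
    p2: "\<forall>u\<in>vert ` P. \<forall>v\<in>vert ` P. u \<noteq> v \<longrightarrow> ((u, v) \<in> vvE E \<longleftrightarrow> dist (p u) (p v) = 2)"
    by (elim exE conjE) blast
  have "emb P E (p \<circ> vert)"
    unfolding emb_def
  proof (intro conjI ballI impI)
    fix a b assume ab: "a \<in> P" "b \<in> P" "a \<noteq> b"
    then show "dist ((p \<circ> vert) a) ((p \<circ> vert) b) \<ge> 2" using p1 by simp
  next
    fix a b assume ab: "a \<in> P" "b \<in> P" "a \<noteq> b"
    then show "(a, b) \<in> E \<longleftrightarrow> dist ((p \<circ> vert) a) ((p \<circ> vert) b) = 2"
      using p2 vvE_mem[of a b E] by simp
  qed
  then show "\<exists>p. emb P E p" by blast
next
  assume "\<exists>p. emb P E p"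
  then obtain p where p: "emb P E p" by blast
  define p' where "p' = p \<circ> inv vert"
  have pv: "p' (vert a) = p a" for a by (simp add: p'_def inv_f_f[OF inj_vert])
  have sub: "vvE E \<subseteq> vert ` P \<times> vert ` P" using assms(1) by (auto simp: vvE_def)
  have nl: "\<forall>v. (v, v) \<notin> vvE E" using assms(2) by (auto simp: vvE_def)
  have e1: "\<forall>a\<in>P. \<forall>b\<in>P. a \<noteq> b \<longrightarrow> dist (p a) (p b) \<ge> 2"
    and e2: "\<forall>a\<in>P. \<forall>b\<in>P. a \<noteq> b \<longrightarrow> ((a, b) \<in> E \<longleftrightarrow> dist (p a) (p b) = 2)"
    using p unfolding emb_def by blast+
  have c1: "\<forall>u\<in>vert ` P. \<forall>v\<in>vert ` P. u \<noteq> v \<longrightarrow> dist (p' u) (p' v) \<ge> 2"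
  proof (intro ballI impI)
    fix u v assume "u \<in> vert ` P" "v \<in> vert ` P" "u \<noteq> v"
    then obtain a b where "a \<in> P" "b \<in> P" "u = vert a" "v = vert b" "a \<noteq> b" by blast
    then show "dist (p' u) (p' v) \<ge> 2" using e1 by (simp add: pv)
  qed
  have c2: "\<forall>u\<in>vert ` P. \<forall>v\<in>vert ` P. u \<noteq> v \<longrightarrow> ((u, v) \<in> vvE E \<longleftrightarrow> dist (p' u) (p' v) = 2)"
  proof (intro ballI impI)
    fix u v assume "u \<in> vert ` P" "v \<in> vert ` P" "u \<noteq> v"
    then obtain a b where "a \<in> P" "b \<in> P" "u = vert a" "v = vert b" "a \<noteq> b" by blast
    then show "(u, v) \<in> vvE E \<longleftrightarrow> dist (p' u) (p' v) = 2" using e2 by (simp add: pv vvE_mem)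
  qed
  show "penny_graph (vert ` P) (vvE E)"
    unfolding penny_graph_def using sub nl c1 c2 by blast
qed

lemma nbhd_transfer:
  "closed_nbhd (vert ` P) (vvE E) (vert ` S) = vert ` closed_nbhd P E S"
  unfolding closed_nbhd_def by (auto simp: vvE_mem image_iff Bex_def) (force simp: vvE_mem)+

lemma wf_enc:
  assumes "finite P" "(0,0) \<in> P" "(1,0) \<in> P"
  shows "wf_labelled_graph 2 (enc ` P) (encE (EL P)) sig"
  unfolding wf_labelled_graph_def wf_graph_def
proof (intro conjI)
  show "finite (enc ` P)" using assms by simp
  show "encE (EL P) \<subseteq> enc ` P \<times> enc ` P" by (auto simp: encE_def EL_def)
  show "sym (encE (EL P))" by (auto simp: sym_def encE_def EL_def image_iff intro: ladj_sym)
  show "\<forall>v. (v, v) \<notin> encE (EL P)" by (auto simp: encE_def EL_def ladj_irrefl)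
  show "inj_on sig {..<2}" by (auto simp: inj_on_def sig_def less_2_cases_iff)
  show "sig ` {..<2} \<subseteq> enc ` P" using assms by (auto simp: sig_def)
qed



lemma lift_rt:
  assumes "E \<subseteq> P \<times> P" "(\<lambda>x y. (x, y) \<in> E)\<^sup>*\<^sup>* a b"
  shows "(\<lambda>x y. x \<in> vert ` P \<and> y \<in> vert ` P \<and> (x, y) \<in> vvE E)\<^sup>*\<^sup>* (vert a) (vert b)"
  using assms(2)
proof (induction rule: rtranclp_induct)
  case base then show ?case by simp
next
  case (step y z)
  then have "y \<in> P" "z \<in> P" using assms(1) by auto
  moreover have "(vert y, vert z) \<in> vvE E" using step(2) by (simp add: vvE_mem)
  ultimately show ?case using step(3)
    by (simp add: rtranclp.rtrancl_into_rtrancl)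
qed

lemma connected_main:
  assumes hA: "A \<subseteq> {1..N}" and hB: "B \<subseteq> {1..N}"
  shows "connected_graph (vert ` (PL N A \<union> PR N B)) (vvE (Ep N A B))"
  unfolding connected_graph_def
proof (intro conjI ballI)
  show "vert ` (PL N A \<union> PR N B) \<noteq> {}" using base_P[OF hA hB] by blast
next
  fix u v assume "u \<in> vert ` (PL N A \<union> PR N B)" "v \<in> vert ` (PL N A \<union> PR N B)"
  then obtain a b where ab: "a \<in> PL N A \<union> PR N B" "b \<in> PL N A \<union> PR N B" "u = vert a" "v = vert b"
    by blast
  have sub: "Ep N A B \<subseteq> (PL N A \<union> PR N B) \<times> (PL N A \<union> PR N B)"
    using Ep_sub[OF hA hB] by auto
  have r1: "(\<lambda>x y. (x, y) \<in> Ep N A B)\<^sup>*\<^sup>* a (0,0)"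
    using reach_rig[OF hA hB all_rig[OF hA hB ab(1)]] by blast
  have r2: "(\<lambda>x y. (x, y) \<in> Ep N A B)\<^sup>*\<^sup>* (0,0) b"
    using reach_rig[OF hA hB all_rig[OF hA hB ab(2)]] by blast
  show "(\<lambda>x y. x \<in> vert ` (PL N A \<union> PR N B) \<and> y \<in> vert ` (PL N A \<union> PR N B) \<and> (x, y) \<in> vvE (Ep N A B))\<^sup>*\<^sup>* u v"
    unfolding ab(3,4) using lift_rt[OF sub r1] lift_rt[OF sub r2] by (rule rtranclp_trans)
qed

lemma penny_main:
  assumes hA: "A \<subseteq> {1..N}" and hB: "B \<subseteq> {1..N}"
  shows "penny_graph (vert ` (PL N A \<union> PR N B)) (vvE (Ep N A B)) \<longleftrightarrow> A \<inter> B = {}"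
proof -
  have sub: "Ep N A B \<subseteq> (PL N A \<union> PR N B) \<times> (PL N A \<union> PR N B)"
    using Ep_sub[OF hA hB] by auto
  have nl: "\<forall>a. (a, a) \<notin> Ep N A B" using Ep_ladj[OF hA hB] ladj_irrefl by blast
  have "penny_graph (vert ` (PL N A \<union> PR N B)) (vvE (Ep N A B)) \<longleftrightarrow> (\<exists>p. emb (PL N A \<union> PR N B) (Ep N A B) p)"
    by (rule penny_transfer[OF sub nl])
  also have "\<dots> \<longleftrightarrow> A \<inter> B = {}"
  proof
    assume "\<exists>p. emb (PL N A \<union> PR N B) (Ep N A B) p"
    then obtain p where "emb (PL N A \<union> PR N B) (Ep N A B) p" by blast
    then show "A \<inter> B = {}" using nonpenny[OF hA hB] by blast
  next
    assume "A \<inter> B = {}"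
    then show "\<exists>p. emb (PL N A \<union> PR N B) (Ep N A B) p" using penny_emb[OF hA hB] by blast
  qed
  finally show ?thesis .
qed

lemma nbhd_main:
  assumes hA: "A \<subseteq> {1..N}" and hB: "B \<subseteq> {1..N}"
  shows "closed_nbhd (vert ` (PL N A \<union> PR N B)) (vvE (Ep N A B)) (vert ` {(0,0),(1,0)}) = vert ` NS0"
  using nbhd_transfer nbhd_pts[OF hA hB] by metis

lemma edges_NS0:
  assumes hA: "A \<subseteq> {1..N}" and hB: "B \<subseteq> {1..N}" and "a \<in> NS0" "b \<in> NS0"
  shows "(a, b) \<in> Ep N A B \<longleftrightarrow>
    (a \<in> {(0,0),(1,0),(0,1),(1,1)} \<and> b \<in> {(0,0),(1,0),(0,1),(1,1)} \<and> ladj a b) \<or>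
    (a \<in> {(0,0),(1,0),(1,-1),(2,-1)} \<and> b \<in> {(0,0),(1,0),(1,-1),(2,-1)} \<and> ladj a b)"
  using NS0_PL[OF hA hB assms(3)] NS0_PL[OF hA hB assms(4)]
    NS0_PR[OF hA hB assms(3)] NS0_PR[OF hA hB assms(4)]
  unfolding Ep_def EL_def by blast

theorem theorem5p1:
  shows "disjointness_expressing penny_graph 6 1"
  unfolding disjointness_expressing_def
  apply (rule exI[of _ 48])
  apply (intro conjI allI impI)
   apply simp
  subgoal premises N1 for N
  proof (rule exI[of _ 2], rule exI[of _ "\<lambda>X. enc ` PL N X"], rule exI[of _ "\<lambda>X. encE (EL (PL N X))"],
      rule exI[of _ "\<lambda>X. sig"], rule exI[of _ "\<lambda>X. enc ` PR N X"], rule exI[of _ "\<lambda>X. encE (EL (PR N X))"],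
      rule exI[of _ "\<lambda>X. sig"], intro conjI allI impI)
    fix X assume hX: "X \<subseteq> {1..N}"
    have fin: "finite (PL N X \<union> PR N X)" by (rule PP_finite[OF hX hX])
    have b: "(0,0) \<in> PL N X" "(1,0) \<in> PL N X" "(0,0) \<in> PR N X" "(1,0) \<in> PR N X"
      by (auto simp: PL_def PR_def)
    show "wf_labelled_graph 2 (enc ` PL N X) (encE (EL (PL N X))) sig"
      using wf_enc[of "PL N X"] fin b by auto
    show "wf_labelled_graph 2 (enc ` PR N X) (encE (EL (PR N X))) sig"
      using wf_enc[of "PR N X"] fin b by auto
  next
    fix A B assume hA: "A \<subseteq> {1..N}" and hB: "B \<subseteq> {1..N}"
    have cardV: "card (vert ` (PL N A \<union> PR N B)) \<le> 48 * N"
      using PP_card[OF hA hB N1] card_image_le[OF PP_finite[OF hA hB], of vert] by linarith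
    have cardNS: "card (vert ` NS0) \<le> 6"
    proof -
      have "card NS0 = 6" by (simp add: NS0_def)
      moreover have "finite NS0" by (simp add: NS0_def)
      ultimately show ?thesis using card_image_le[of NS0 vert] by simp
    qed
    show "let V = glue_V 2 (enc ` PL N A) sig (enc ` PR N B) sig;
              E = glue_E 2 (encE (EL (PL N A))) sig (encE (EL (PR N B))) sig;
              S = (\<lambda>i. Inl (sig i)) ` {..<2}
          in connected_graph V E \<and> real (card V) \<le> 48 * real N powr (1 / 1) \<and>
             card (closed_nbhd V E S) \<le> 6 \<and> (penny_graph V E \<longleftrightarrow> A \<inter> B = {})"
      unfolding Let_def glue_V_eq glue_E_eq S_eq
      using connected_main[OF hA hB] penny_main[OF hA hB] nbhd_main[OF hA hB] cardV cardNS
      by simp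
  next
    fix A B A' B' assume hA: "A \<subseteq> {1..N}" and hB: "B \<subseteq> {1..N}"
      and hA': "A' \<subseteq> {1..N}" and hB': "B' \<subseteq> {1..N}"
    show "let V = glue_V 2 (enc ` PL N A) sig (enc ` PR N B) sig;
              E = glue_E 2 (encE (EL (PL N A))) sig (encE (EL (PR N B))) sig;
              V' = glue_V 2 (enc ` PL N A') sig (enc ` PR N B') sig;
              E' = glue_E 2 (encE (EL (PL N A'))) sig (encE (EL (PR N B'))) sig;
              NS = closed_nbhd V E ((\<lambda>i. Inl (sig i)) ` {..<2});
              NS' = closed_nbhd V' E' ((\<lambda>i. Inl (sig i)) ` {..<2})
          in \<exists>f. bij_betw f NS NS' \<and> (\<forall>i<2. f (Inl (sig i)) = Inl (sig i)) \<and>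
                (\<forall>u\<in>NS. \<forall>v\<in>NS. (u, v) \<in> E \<longleftrightarrow> (f u, f v) \<in> E')"
      unfolding Let_def glue_V_eq glue_E_eq S_eq nbhd_main[OF hA hB] nbhd_main[OF hA' hB']
    proof (rule exI[of _ id], intro conjI ballI allI impI)
      show "bij_betw id (vert ` NS0) (vert ` NS0)" by simp
    next
      fix i :: nat show "id (Inl (sig i)) = Inl (sig i)" by simp
    next
      fix u v assume "u \<in> vert ` NS0" "v \<in> vert ` NS0"
      then obtain a b where ab: "a \<in> NS0" "b \<in> NS0" "u = vert a" "v = vert b" by blast
      show "(u, v) \<in> vvE (Ep N A B) \<longleftrightarrow> (id u, id v) \<in> vvE (Ep N A' B')"
        unfolding ab(3,4) id_def vvE_mem
        using edges_NS0[OF hA hB ab(1,2)] edges_NS0[OF hA' hB' ab(1,2)] by simp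
    qed
  qed
  done


end
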